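(* Let $A$ and $B$ be rings, $f: A\to B$ a ring homomorphism and $J$ a proper ideal of $B$. Then: (1) If $A\bowtie^{f}J$ is a nil-Armendariz ring, then $A$ is a nil-Armendariz ring. (2) If $A$ and $f(A)+J$ are nil-Armendariz rings, then $A\bowtie^{f}J$ is a nil-Armendariz ring.
   Context: All rings are associative with identity (not necessarily commutative), ring homomorphisms are unital, and ideals are two-sided. $\mathrm{nil}(R)$ denotes the set of nilpotent elements of a ring $R$, and $\mathrm{nil}(R)[x]$ the set of polynomials all of whose coefficients lie in $\mathrm{nil}(R)$. For a ring homomorphism $f:A\to B$ and an ideal $J$ of $B$, the amalgamation is the subring $A\bowtie^{f}J=\{(a,f(a)+j)\mid a\in A,\ j\in J\}$ of $A\times B$; $f(A)+J=\{f(a)+j: a\in A, j\in J\}$ is a subring of $B$. A ring $R$ is nil-Armendariz if whenever $p(x)=\sum_{i=0}^n a_ix^i$ and $q(x)=\sum_{j=0}^m b_jx^j$ in $R[x]$ satisfy $p(x)q(x)\in\mathrm{nil}(R)[x]$, then $a_ib_j\in\mathrm{nil}(R)$ for all $i,j$. *)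

theory Defs
  imports "HOL-Algebra.Algebra"
begin

definition nil_elems :: "('a, 'm) ring_scheme \<Rightarrow> 'a set" where
  "nil_elems R = {x \<in> carrier R. \<exists>n::nat. x [^]\<^bsub>R\<^esub> n = \<zero>\<^bsub>R\<^esub>}"

definition is_poly_coeffs :: "('a, 'm) ring_scheme \<Rightarrow> (nat \<Rightarrow> 'a) \<Rightarrow> bool" where
  "is_poly_coeffs R p \<longleftrightarrow> (\<forall>i. p i \<in> carrier R) \<and> (\<exists>n. \<forall>i>n. p i = \<zero>\<^bsub>R\<^esub>)"

definition prod_coeff :: "('a, 'm) ring_scheme \<Rightarrow> (nat \<Rightarrow> 'a) \<Rightarrow> (nat \<Rightarrow> 'a) \<Rightarrow> nat \<Rightarrow> 'a" where
  "prod_coeff R p q k = finsum R (\<lambda>i. p i \<otimes>\<^bsub>R\<^esub> q (k - i)) {..k}"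

definition nil_armendariz :: "('a, 'm) ring_scheme \<Rightarrow> bool" where
  "nil_armendariz R \<longleftrightarrow>
     (\<forall>p q. is_poly_coeffs R p \<longrightarrow> is_poly_coeffs R q \<longrightarrow>
        (\<forall>k. prod_coeff R p q k \<in> nil_elems R) \<longrightarrow>
        (\<forall>i j. p i \<otimes>\<^bsub>R\<^esub> q j \<in> nil_elems R))"

definition amalgamation ::
  "('a, 'm) ring_scheme \<Rightarrow> ('b, 'n) ring_scheme \<Rightarrow> ('a \<Rightarrow> 'b) \<Rightarrow> 'b set \<Rightarrow> ('a \<times> 'b) ring" where
  "amalgamation A B f J =
     (RDirProd A B) \<lparr> carrier := {(a, f a \<oplus>\<^bsub>B\<^esub> j) | a j. a \<in> carrier A \<and> j \<in> J} \<rparr>"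

definition image_plus_ideal ::
  "('a, 'm) ring_scheme \<Rightarrow> ('b, 'n) ring_scheme \<Rightarrow> ('a \<Rightarrow> 'b) \<Rightarrow> 'b set \<Rightarrow> ('b, 'n) ring_scheme" where
  "image_plus_ideal A B f J =
     B \<lparr> carrier := {f a \<oplus>\<^bsub>B\<^esub> j | a j. a \<in> carrier A \<and> j \<in> J} \<rparr>"

end

theory Submission
  imports Defs
begin

lemma RDP_ops[simp]:
  "(a, b) \<otimes>\<^bsub>RDirProd R S\<^esub> (c, d) = (a \<otimes>\<^bsub>R\<^esub> c, b \<otimes>\<^bsub>S\<^esub> d)"
  "(a, b) \<oplus>\<^bsub>RDirProd R S\<^esub> (c, d) = (a \<oplus>\<^bsub>R\<^esub> c, b \<oplus>\<^bsub>S\<^esub> d)"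
  "\<zero>\<^bsub>RDirProd R S\<^esub> = (\<zero>\<^bsub>R\<^esub>, \<zero>\<^bsub>S\<^esub>)"
  "\<one>\<^bsub>RDirProd R S\<^esub> = (\<one>\<^bsub>R\<^esub>, \<one>\<^bsub>S\<^esub>)"
  by (simp_all add: RDirProd_def DirProd_def monoid.defs)

lemma RDP_pow: "(a, b) [^]\<^bsub>RDirProd R S\<^esub> (n::nat) = (a [^]\<^bsub>R\<^esub> n, b [^]\<^bsub>S\<^esub> n)"
  by (induct n) simp_all

lemma upd_pow: "x [^]\<^bsub>R\<lparr>carrier := H\<rparr>\<^esub> (n::nat) = x [^]\<^bsub>R\<^esub> n"
  by (simp add: nat_pow_def)

lemma subring_finsum:
  assumes R: "ring R" and H: "subring H R" and fin: "finite I" and F: "F ` I \<subseteq> H"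
  shows "finsum (R\<lparr>carrier := H\<rparr>) F I = finsum R F I"
  using fin F
proof (induct I rule: finite_induct)
  case empty
  interpret R2: ring "R\<lparr>carrier := H\<rparr>" using ring.subring_is_ring[OF R H] .
  interpret R: ring R by (rule R)
  show ?case by simp
next
  case (insert i I)
  have R2: "ring (R\<lparr>carrier := H\<rparr>)" using ring.subring_is_ring[OF R H] .
  have Hs: "H \<subseteq> carrier R" using subringE(1)[OF H] .
  have "finsum (R\<lparr>carrier := H\<rparr>) F (insert i I) = F i \<oplus>\<^bsub>R\<lparr>carrier := H\<rparr>\<^esub> finsum (R\<lparr>carrier := H\<rparr>) F I"
    using insert R2 by (intro abelian_monoid.finsum_insert) (auto simp: ring.axioms(1) abelian_group.axioms)
  also have "\<dots> = F i \<oplus>\<^bsub>R\<^esub> finsum R F I" using insert by simp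
  also have "\<dots> = finsum R F (insert i I)"
    using insert R Hs by (intro abelian_monoid.finsum_insert[symmetric]) (auto simp: ring.axioms(1) abelian_group.axioms)
  finally show ?case .
qed

lemma RDP_finsum:
  assumes R: "ring R" and S: "ring S" and fin: "finite I" and F: "F ` I \<subseteq> carrier R \<times> carrier S"
  shows "finsum (RDirProd R S) F I = (finsum R (\<lambda>x. fst (F x)) I, finsum S (\<lambda>x. snd (F x)) I)"
  using fin F
proof (induct I rule: finite_induct)
  case empty
  interpret P: ring "RDirProd R S" using RDirProd_ring[OF R S] .
  interpret R: ring R by (rule R)
  interpret S: ring S by (rule S)
  show ?case by simp
next
  case (insert i I)
  have P: "ring (RDirProd R S)" using RDirProd_ring[OF R S] .
  have "finsum (RDirProd R S) F (insert i I) = F i \<oplus>\<^bsub>RDirProd R S\<^esub> finsum (RDirProd R S) F I"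
    using insert P by (intro abelian_monoid.finsum_insert) (auto simp: ring.axioms(1) abelian_group.axioms RDirProd_carrier)
  also have "\<dots> = (fst (F i) \<oplus>\<^bsub>R\<^esub> finsum R (\<lambda>x. fst (F x)) I, snd (F i) \<oplus>\<^bsub>S\<^esub> finsum S (\<lambda>x. snd (F x)) I)"
    using insert by (cases "F i") simp
  also have "\<dots> = (finsum R (\<lambda>x. fst (F x)) (insert i I), finsum S (\<lambda>x. snd (F x)) (insert i I))"
    using insert R S
    by (subst abelian_monoid.finsum_insert[of R], auto simp: ring.axioms(1) abelian_group.axioms,
        subst abelian_monoid.finsum_insert[of S], auto simp: ring.axioms(1) abelian_group.axioms)
  finally show ?case .
qed

lemma RDP_neg:
  assumes R: "ring R" and S: "ring S" and a: "a \<in> carrier R" and b: "b \<in> carrier S"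
  shows "\<ominus>\<^bsub>RDirProd R S\<^esub> (a, b) = (\<ominus>\<^bsub>R\<^esub> a, \<ominus>\<^bsub>S\<^esub> b)"
proof -
  interpret P: ring "RDirProd R S" using RDirProd_ring[OF R S] .
  interpret R: ring R by (rule R)
  interpret S: ring S by (rule S)
  show ?thesis
    by (rule P.minus_equality) (use a b in \<open>auto simp: RDirProd_carrier R.l_neg S.l_neg\<close>)
qed

lemma amal_subring:
  assumes A: "ring A" and B: "ring B" and f: "f \<in> ring_hom A B" and J: "ideal J B"
  shows "subring {(a, f a \<oplus>\<^bsub>B\<^esub> j) | a j. a \<in> carrier A \<and> j \<in> J} (RDirProd A B)"
proof -
  interpret P: ring "RDirProd A B" using RDirProd_ring[OF A B] .
  interpret A: ring A by (rule A)
  interpret B: ring B by (rule B)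
  interpret h: ring_hom_ring A B f by (rule ring_hom_ringI2[OF A B f])
  interpret J: ideal J B by (rule J)
  have JB: "\<And>j. j \<in> J \<Longrightarrow> j \<in> carrier B" using J.a_subset by auto
  show ?thesis
  proof (rule P.subringI)
    show "{(a, f a \<oplus>\<^bsub>B\<^esub> j) | a j. a \<in> carrier A \<and> j \<in> J} \<subseteq> carrier (RDirProd A B)"
      using JB by (auto simp: RDirProd_carrier)
    show "\<one>\<^bsub>RDirProd A B\<^esub> \<in> {(a, f a \<oplus>\<^bsub>B\<^esub> j) | a j. a \<in> carrier A \<and> j \<in> J}"
      by (auto intro!: exI[of _ "\<one>\<^bsub>A\<^esub>"] exI[of _ "\<zero>\<^bsub>B\<^esub>"] J.zero_closed)
  next
    fix h assume "h \<in> {(a, f a \<oplus>\<^bsub>B\<^esub> j) | a j. a \<in> carrier A \<and> j \<in> J}"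
    then obtain a j where h: "h = (a, f a \<oplus>\<^bsub>B\<^esub> j)" "a \<in> carrier A" "j \<in> J" by auto
    have "\<ominus>\<^bsub>RDirProd A B\<^esub> h = (\<ominus>\<^bsub>A\<^esub> a, f (\<ominus>\<^bsub>A\<^esub> a) \<oplus>\<^bsub>B\<^esub> \<ominus>\<^bsub>B\<^esub> j)"
      using h JB[OF h(3)] by (simp add: RDP_neg[OF A B] B.minus_add h.hom_a_inv)
    then show "\<ominus>\<^bsub>RDirProd A B\<^esub> h \<in> {(a, f a \<oplus>\<^bsub>B\<^esub> j) | a j. a \<in> carrier A \<and> j \<in> J}"
      using h by (auto intro: J.a_inv_closed)
  next
    fix h1 h2 assume "h1 \<in> {(a, f a \<oplus>\<^bsub>B\<^esub> j) | a j. a \<in> carrier A \<and> j \<in> J}"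
      "h2 \<in> {(a, f a \<oplus>\<^bsub>B\<^esub> j) | a j. a \<in> carrier A \<and> j \<in> J}"
    then obtain a j c k where h: "h1 = (a, f a \<oplus>\<^bsub>B\<^esub> j)" "a \<in> carrier A" "j \<in> J"
      "h2 = (c, f c \<oplus>\<^bsub>B\<^esub> k)" "c \<in> carrier A" "k \<in> J" by auto
    have jB: "j \<in> carrier B" "k \<in> carrier B" using JB h by auto
    have fa: "f a \<in> carrier B" "f c \<in> carrier B" using h by auto
    have "h1 \<otimes>\<^bsub>RDirProd A B\<^esub> h2 = (a \<otimes>\<^bsub>A\<^esub> c, f (a \<otimes>\<^bsub>A\<^esub> c) \<oplus>\<^bsub>B\<^esub>
        ((f a \<otimes>\<^bsub>B\<^esub> k \<oplus>\<^bsub>B\<^esub> j \<otimes>\<^bsub>B\<^esub> f c) \<oplus>\<^bsub>B\<^esub> j \<otimes>\<^bsub>B\<^esub> k))"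
      using h jB fa by (simp add: h.hom_mult B.l_distr B.r_distr B.a_ac)
    moreover have "(f a \<otimes>\<^bsub>B\<^esub> k \<oplus>\<^bsub>B\<^esub> j \<otimes>\<^bsub>B\<^esub> f c) \<oplus>\<^bsub>B\<^esub> j \<otimes>\<^bsub>B\<^esub> k \<in> J"
      using h jB fa by (intro J.a_closed J.I_l_closed J.I_r_closed) auto
    ultimately show "h1 \<otimes>\<^bsub>RDirProd A B\<^esub> h2 \<in> {(a, f a \<oplus>\<^bsub>B\<^esub> j) | a j. a \<in> carrier A \<and> j \<in> J}"
      using h by auto
    have "h1 \<oplus>\<^bsub>RDirProd A B\<^esub> h2 = (a \<oplus>\<^bsub>A\<^esub> c, f (a \<oplus>\<^bsub>A\<^esub> c) \<oplus>\<^bsub>B\<^esub> (j \<oplus>\<^bsub>B\<^esub> k))"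
      using h jB fa by (simp add: h.hom_add B.a_ac)
    then show "h1 \<oplus>\<^bsub>RDirProd A B\<^esub> h2 \<in> {(a, f a \<oplus>\<^bsub>B\<^esub> j) | a j. a \<in> carrier A \<and> j \<in> J}"
      using h by (auto intro: J.a_closed)
  qed
qed

lemma img_subring:
  assumes A: "ring A" and B: "ring B" and f: "f \<in> ring_hom A B" and J: "ideal J B"
  shows "subring {f a \<oplus>\<^bsub>B\<^esub> j | a j. a \<in> carrier A \<and> j \<in> J} B"
proof -
  interpret A: ring A by (rule A)
  interpret B: ring B by (rule B)
  interpret h: ring_hom_ring A B f by (rule ring_hom_ringI2[OF A B f])
  interpret J: ideal J B by (rule J)
  have JB: "\<And>j. j \<in> J \<Longrightarrow> j \<in> carrier B" using J.a_subset by auto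
  show ?thesis
  proof (rule B.subringI)
    show "{f a \<oplus>\<^bsub>B\<^esub> j | a j. a \<in> carrier A \<and> j \<in> J} \<subseteq> carrier B"
      using JB by auto
    show "\<one>\<^bsub>B\<^esub> \<in> {f a \<oplus>\<^bsub>B\<^esub> j | a j. a \<in> carrier A \<and> j \<in> J}"
      by (auto intro!: exI[of _ "\<one>\<^bsub>A\<^esub>"] exI[of _ "\<zero>\<^bsub>B\<^esub>"] J.zero_closed)
  next
    fix h assume "h \<in> {f a \<oplus>\<^bsub>B\<^esub> j | a j. a \<in> carrier A \<and> j \<in> J}"
    then obtain a j where h: "h = f a \<oplus>\<^bsub>B\<^esub> j" "a \<in> carrier A" "j \<in> J" by auto
    have "\<ominus>\<^bsub>B\<^esub> h = f (\<ominus>\<^bsub>A\<^esub> a) \<oplus>\<^bsub>B\<^esub> \<ominus>\<^bsub>B\<^esub> j"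
      using h JB[OF h(3)] by (simp add: B.minus_add h.hom_a_inv)
    then show "\<ominus>\<^bsub>B\<^esub> h \<in> {f a \<oplus>\<^bsub>B\<^esub> j | a j. a \<in> carrier A \<and> j \<in> J}"
      using h by (auto intro!: exI[of _ "\<ominus>\<^bsub>A\<^esub> a"] exI[of _ "\<ominus>\<^bsub>B\<^esub> j"] J.a_inv_closed)
  next
    fix h1 h2 assume "h1 \<in> {f a \<oplus>\<^bsub>B\<^esub> j | a j. a \<in> carrier A \<and> j \<in> J}"
      "h2 \<in> {f a \<oplus>\<^bsub>B\<^esub> j | a j. a \<in> carrier A \<and> j \<in> J}"
    then obtain a j c k where h: "h1 = f a \<oplus>\<^bsub>B\<^esub> j" "a \<in> carrier A" "j \<in> J"
      "h2 = f c \<oplus>\<^bsub>B\<^esub> k" "c \<in> carrier A" "k \<in> J" by auto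
    have jB: "j \<in> carrier B" "k \<in> carrier B" using JB h by auto
    have fa: "f a \<in> carrier B" "f c \<in> carrier B" using h by auto
    have "h1 \<otimes>\<^bsub>B\<^esub> h2 = f (a \<otimes>\<^bsub>A\<^esub> c) \<oplus>\<^bsub>B\<^esub>
        ((f a \<otimes>\<^bsub>B\<^esub> k \<oplus>\<^bsub>B\<^esub> j \<otimes>\<^bsub>B\<^esub> f c) \<oplus>\<^bsub>B\<^esub> j \<otimes>\<^bsub>B\<^esub> k)"
      using h jB fa by (simp add: h.hom_mult B.l_distr B.r_distr B.a_ac)
    moreover have "(f a \<otimes>\<^bsub>B\<^esub> k \<oplus>\<^bsub>B\<^esub> j \<otimes>\<^bsub>B\<^esub> f c) \<oplus>\<^bsub>B\<^esub> j \<otimes>\<^bsub>B\<^esub> k \<in> J"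
      using h jB fa by (intro J.a_closed J.I_l_closed J.I_r_closed) auto
    ultimately show "h1 \<otimes>\<^bsub>B\<^esub> h2 \<in> {f a \<oplus>\<^bsub>B\<^esub> j | a j. a \<in> carrier A \<and> j \<in> J}"
      using h by (intro CollectI exI[of _ "a \<otimes>\<^bsub>A\<^esub> c"] exI[of _ "(f a \<otimes>\<^bsub>B\<^esub> k \<oplus>\<^bsub>B\<^esub> j \<otimes>\<^bsub>B\<^esub> f c) \<oplus>\<^bsub>B\<^esub> j \<otimes>\<^bsub>B\<^esub> k"]) auto
    have "h1 \<oplus>\<^bsub>B\<^esub> h2 = f (a \<oplus>\<^bsub>A\<^esub> c) \<oplus>\<^bsub>B\<^esub> (j \<oplus>\<^bsub>B\<^esub> k)"
      using h jB fa by (simp add: h.hom_add B.a_ac)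
    then show "h1 \<oplus>\<^bsub>B\<^esub> h2 \<in> {f a \<oplus>\<^bsub>B\<^esub> j | a j. a \<in> carrier A \<and> j \<in> J}"
      using h by (intro CollectI exI[of _ "a \<oplus>\<^bsub>A\<^esub> c"] exI[of _ "j \<oplus>\<^bsub>B\<^esub> k"]) (auto intro: J.a_closed)
  qed
qed

lemma pow_add_zero:
  assumes R: "ring R" and x: "x \<in> carrier R" and n: "x [^]\<^bsub>R\<^esub> (n::nat) = \<zero>\<^bsub>R\<^esub>"
  shows "x [^]\<^bsub>R\<^esub> (n + m) = \<zero>\<^bsub>R\<^esub>"
proof -
  interpret R: ring R by (rule R)
  have "x [^]\<^bsub>R\<^esub> (n + m) = x [^]\<^bsub>R\<^esub> n \<otimes>\<^bsub>R\<^esub> x [^]\<^bsub>R\<^esub> m"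
    using x by (simp add: R.nat_pow_mult)
  then show ?thesis using n x by simp
qed

lemma amal_nil_iff:
  "(x, y) \<in> nil_elems (amalgamation A B f J) \<longleftrightarrow>
     (x, y) \<in> carrier (amalgamation A B f J) \<and>
     (\<exists>n::nat. x [^]\<^bsub>A\<^esub> n = \<zero>\<^bsub>A\<^esub> \<and> y [^]\<^bsub>B\<^esub> n = \<zero>\<^bsub>B\<^esub>)"
  unfolding nil_elems_def amalgamation_def by (simp add: upd_pow RDP_pow)

lemma part1:
  assumes A: "ring A" and B: "ring B" and f: "f \<in> ring_hom A B" and J: "ideal J B"
    and NA: "nil_armendariz (amalgamation A B f J)"
  shows "nil_armendariz A"
proof -
  interpret A: ring A by (rule A)
  interpret B: ring B by (rule B)
  interpret h: ring_hom_ring A B f by (rule ring_hom_ringI2[OF A B f])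
  interpret J: ideal J B by (rule J)
  define M where "M = {(a, f a \<oplus>\<^bsub>B\<^esub> j) | a j. a \<in> carrier A \<and> j \<in> J}"
  define Am where "Am = amalgamation A B f J"
  have Am_eq: "Am = (RDirProd A B)\<lparr>carrier := M\<rparr>" unfolding Am_def M_def amalgamation_def ..
  have sub: "subring M (RDirProd A B)" unfolding M_def using amal_subring[OF A B f J] .
  have Pring: "ring (RDirProd A B)" using RDirProd_ring[OF A B] .
  have inM: "\<And>x. x \<in> carrier A \<Longrightarrow> (x, f x) \<in> M"
    unfolding M_def by (auto intro!: exI[of _ "\<zero>\<^bsub>B\<^esub>"] J.zero_closed)
  show ?thesis unfolding nil_armendariz_def
  proof (intro allI impI)
    fix p q i j
    assume pp: "is_poly_coeffs A p" and qq: "is_poly_coeffs A q"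
      and pq: "\<forall>k. prod_coeff A p q k \<in> nil_elems A"
    define P where "P = (\<lambda>i. (p i, f (p i)))"
    define Q where "Q = (\<lambda>i. (q i, f (q i)))"
    have pc: "\<And>i. p i \<in> carrier A" and qc: "\<And>i. q i \<in> carrier A"
      using pp qq unfolding is_poly_coeffs_def by auto
    have PM: "\<And>i. P i \<in> M" and QM: "\<And>i. Q i \<in> M" using inM pc qc P_def Q_def by auto
    have polyP: "is_poly_coeffs Am P"
    proof -
      obtain n where "\<forall>i>n. p i = \<zero>\<^bsub>A\<^esub>" using pp unfolding is_poly_coeffs_def by auto
      then show ?thesis using PM unfolding is_poly_coeffs_def Am_eq P_def by auto
    qed
    have polyQ: "is_poly_coeffs Am Q"
    proof -
      obtain n where "\<forall>i>n. q i = \<zero>\<^bsub>A\<^esub>" using qq unfolding is_poly_coeffs_def by auto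
      then show ?thesis using QM unfolding is_poly_coeffs_def Am_eq Q_def by auto
    qed
    have "\<forall>k. prod_coeff Am P Q k \<in> nil_elems Am"
    proof
      fix k
      define x where "x = prod_coeff A p q k"
      have xc: "x \<in> carrier A" and xn: "\<exists>n. x [^]\<^bsub>A\<^esub> (n::nat) = \<zero>\<^bsub>A\<^esub>"
        using pq unfolding x_def nil_elems_def by auto
      have img: "(\<lambda>i. P i \<otimes>\<^bsub>RDirProd A B\<^esub> Q (k - i)) ` {..k} \<subseteq> M"
        using subringE(6)[OF sub] PM QM by (simp add: image_subset_iff)
      have "prod_coeff Am P Q k = finsum (RDirProd A B) (\<lambda>i. P i \<otimes>\<^bsub>RDirProd A B\<^esub> Q (k - i)) {..k}"
        unfolding prod_coeff_def Am_eq
        using subring_finsum[OF Pring sub _ img] by simp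
      also have "\<dots> = (x, f x)"
        using pc qc unfolding x_def prod_coeff_def
        by (subst RDP_finsum[OF A B]) (auto simp: P_def Q_def RDirProd_carrier comp_def)
      finally have eq: "prod_coeff Am P Q k = (x, f x)" .
      obtain n where "x [^]\<^bsub>A\<^esub> (n::nat) = \<zero>\<^bsub>A\<^esub>" using xn by auto
      moreover have "f x [^]\<^bsub>B\<^esub> n = f (x [^]\<^bsub>A\<^esub> n)" using h.hom_nat_pow xc by simp
      ultimately have "f x [^]\<^bsub>B\<^esub> n = \<zero>\<^bsub>B\<^esub>" by simp
      have "carrier Am = M" unfolding Am_eq by simp
      then have "(x, f x) \<in> nil_elems Am"
        unfolding Am_def amal_nil_iff using inM[OF xc] \<open>x [^]\<^bsub>A\<^esub> n = \<zero>\<^bsub>A\<^esub>\<close>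
          \<open>f x [^]\<^bsub>B\<^esub> n = \<zero>\<^bsub>B\<^esub>\<close> unfolding Am_def by auto
      then show "prod_coeff Am P Q k \<in> nil_elems Am" using eq by simp
    qed
    then have "P i \<otimes>\<^bsub>Am\<^esub> Q j \<in> nil_elems Am"
      using NA polyP polyQ unfolding nil_armendariz_def Am_def by blast
    moreover have "P i \<otimes>\<^bsub>Am\<^esub> Q j = (p i \<otimes>\<^bsub>A\<^esub> q j, f (p i) \<otimes>\<^bsub>B\<^esub> f (q j))"
      unfolding Am_eq P_def Q_def by simp
    ultimately obtain n where "(p i \<otimes>\<^bsub>A\<^esub> q j) [^]\<^bsub>A\<^esub> (n::nat) = \<zero>\<^bsub>A\<^esub>"
      unfolding Am_def by (auto simp: amal_nil_iff)
    then show "p i \<otimes>\<^bsub>A\<^esub> q j \<in> nil_elems A"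
      unfolding nil_elems_def using pc qc by auto
  qed
qed

lemma RDP_mult_gen: "x \<otimes>\<^bsub>RDirProd R S\<^esub> y = (fst x \<otimes>\<^bsub>R\<^esub> fst y, snd x \<otimes>\<^bsub>S\<^esub> snd y)"
  by (cases x, cases y) simp

lemma part2:
  assumes A: "ring A" and B: "ring B" and f: "f \<in> ring_hom A B" and J: "ideal J B"
    and NA: "nil_armendariz A" and NC: "nil_armendariz (image_plus_ideal A B f J)"
  shows "nil_armendariz (amalgamation A B f J)"
proof -
  interpret A: ring A by (rule A)
  interpret B: ring B by (rule B)
  interpret h: ring_hom_ring A B f by (rule ring_hom_ringI2[OF A B f])
  interpret J: ideal J B by (rule J)
  define M where "M = {(a, f a \<oplus>\<^bsub>B\<^esub> j) | a j. a \<in> carrier A \<and> j \<in> J}"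
  define Cs where "Cs = {f a \<oplus>\<^bsub>B\<^esub> j | a j. a \<in> carrier A \<and> j \<in> J}"
  define Am where "Am = amalgamation A B f J"
  define C where "C = image_plus_ideal A B f J"
  have Am_eq: "Am = (RDirProd A B)\<lparr>carrier := M\<rparr>" unfolding Am_def M_def amalgamation_def ..
  have C_eq: "C = B\<lparr>carrier := Cs\<rparr>" unfolding C_def Cs_def image_plus_ideal_def ..
  have sub: "subring M (RDirProd A B)" unfolding M_def using amal_subring[OF A B f J] .
  have subC: "subring Cs B" unfolding Cs_def using img_subring[OF A B f J] .
  have Pring: "ring (RDirProd A B)" using RDirProd_ring[OF A B] .
  have Mprop: "\<And>x. x \<in> M \<Longrightarrow> fst x \<in> carrier A \<and> snd x \<in> Cs"
    unfolding M_def Cs_def by fastforce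
  have CsB: "Cs \<subseteq> carrier B" using subringE(1)[OF subC] .
  show ?thesis unfolding nil_armendariz_def Am_def[symmetric]
  proof (intro allI impI)
    fix P Q i j
    assume PP: "is_poly_coeffs Am P" and QQ: "is_poly_coeffs Am Q"
      and PQ: "\<forall>k. prod_coeff Am P Q k \<in> nil_elems Am"
    define p where "p = (\<lambda>i. fst (P i))"
    define p' where "p' = (\<lambda>i. snd (P i))"
    define q where "q = (\<lambda>i. fst (Q i))"
    define q' where "q' = (\<lambda>i. snd (Q i))"
    have PM: "\<And>i. P i \<in> M" and QM: "\<And>i. Q i \<in> M"
      using PP QQ unfolding is_poly_coeffs_def Am_eq by auto
    have pc: "\<And>i. p i \<in> carrier A" "\<And>i. q i \<in> carrier A"
      and pc': "\<And>i. p' i \<in> Cs" "\<And>i. q' i \<in> Cs"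
      using Mprop PM QM p_def q_def p'_def q'_def by auto
    have pcB: "\<And>i. p' i \<in> carrier B" "\<And>i. q' i \<in> carrier B" using pc' CsB by auto
    obtain n1 where n1: "\<forall>i>n1. P i = (\<zero>\<^bsub>A\<^esub>, \<zero>\<^bsub>B\<^esub>)"
      using PP unfolding is_poly_coeffs_def Am_eq by auto
    obtain n2 where n2: "\<forall>i>n2. Q i = (\<zero>\<^bsub>A\<^esub>, \<zero>\<^bsub>B\<^esub>)"
      using QQ unfolding is_poly_coeffs_def Am_eq by auto
    have polyp: "is_poly_coeffs A p" "is_poly_coeffs A q"
      unfolding is_poly_coeffs_def using pc
       apply (auto simp: p_def intro!: exI[of _ n1] dest: n1[rule_format])[1]
      using pc by (auto simp: q_def intro!: exI[of _ n2] dest: n2[rule_format])[1]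
    have polyp': "is_poly_coeffs C p'" "is_poly_coeffs C q'"
      unfolding is_poly_coeffs_def C_eq using pc'
       apply (auto simp: p'_def intro!: exI[of _ n1] dest: n1[rule_format])[1]
      using pc' by (auto simp: q'_def intro!: exI[of _ n2] dest: n2[rule_format])[1]
    have pcC: "\<And>k. prod_coeff C p' q' k = prod_coeff B p' q' k"
    proof -
      fix k
      have img: "(\<lambda>i. p' i \<otimes>\<^bsub>B\<^esub> q' (k - i)) ` {..k} \<subseteq> Cs"
        using subringE(6)[OF subC] pc' by (simp add: image_subset_iff)
      show "prod_coeff C p' q' k = prod_coeff B p' q' k"
        unfolding prod_coeff_def C_eq using subring_finsum[OF B subC _ img] by simp
    qed
    have eq: "\<And>k. prod_coeff Am P Q k = (prod_coeff A p q k, prod_coeff B p' q' k)"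
    proof -
      fix k
      have img: "(\<lambda>i. P i \<otimes>\<^bsub>RDirProd A B\<^esub> Q (k - i)) ` {..k} \<subseteq> M"
        using subringE(6)[OF sub] PM QM by (simp add: image_subset_iff)
      have "prod_coeff Am P Q k = finsum (RDirProd A B) (\<lambda>i. P i \<otimes>\<^bsub>RDirProd A B\<^esub> Q (k - i)) {..k}"
        unfolding prod_coeff_def Am_eq
        using subring_finsum[OF Pring sub _ img] by simp
      also have "\<dots> = (prod_coeff A p q k, prod_coeff B p' q' k)"
        using pc pcB unfolding prod_coeff_def
        by (subst RDP_finsum[OF A B]) (auto simp: p_def q_def p'_def q'_def RDirProd_carrier RDP_mult_gen)
      finally show "prod_coeff Am P Q k = (prod_coeff A p q k, prod_coeff B p' q' k)" .
    qed
    have nilA: "\<forall>k. prod_coeff A p q k \<in> nil_elems A"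
         and nilC: "\<forall>k. prod_coeff C p' q' k \<in> nil_elems C"
    proof -
      {
        fix k
        have "(prod_coeff A p q k, prod_coeff B p' q' k) \<in> nil_elems Am" using PQ eq by metis
        then have mem: "(prod_coeff A p q k, prod_coeff B p' q' k) \<in> M"
          and "\<exists>n::nat. prod_coeff A p q k [^]\<^bsub>A\<^esub> n = \<zero>\<^bsub>A\<^esub> \<and> prod_coeff B p' q' k [^]\<^bsub>B\<^esub> n = \<zero>\<^bsub>B\<^esub>"
          unfolding Am_def amal_nil_iff by (auto simp: Am_eq[unfolded Am_def])
        then obtain n where n: "prod_coeff A p q k [^]\<^bsub>A\<^esub> (n::nat) = \<zero>\<^bsub>A\<^esub>"
          "prod_coeff B p' q' k [^]\<^bsub>B\<^esub> n = \<zero>\<^bsub>B\<^esub>" by auto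
        have "prod_coeff A p q k \<in> nil_elems A" unfolding nil_elems_def using Mprop[OF mem] n by auto
        moreover have "prod_coeff C p' q' k \<in> nil_elems C"
          unfolding nil_elems_def pcC using Mprop[OF mem] n by (auto simp: C_eq upd_pow)
        ultimately have "prod_coeff A p q k \<in> nil_elems A \<and> prod_coeff C p' q' k \<in> nil_elems C" ..
      }
      then show "\<forall>k. prod_coeff A p q k \<in> nil_elems A" "\<forall>k. prod_coeff C p' q' k \<in> nil_elems C" by auto
    qed
    have "p i \<otimes>\<^bsub>A\<^esub> q j \<in> nil_elems A"
      using NA polyp nilA unfolding nil_armendariz_def by blast
    then obtain m1 where m1: "(p i \<otimes>\<^bsub>A\<^esub> q j) [^]\<^bsub>A\<^esub> (m1::nat) = \<zero>\<^bsub>A\<^esub>"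
      unfolding nil_elems_def by auto
    have "p' i \<otimes>\<^bsub>C\<^esub> q' j \<in> nil_elems C"
      using NC polyp' nilC unfolding nil_armendariz_def C_def by blast
    then obtain m2 where m2: "(p' i \<otimes>\<^bsub>B\<^esub> q' j) [^]\<^bsub>B\<^esub> (m2::nat) = \<zero>\<^bsub>B\<^esub>"
      unfolding nil_elems_def by (auto simp: C_eq upd_pow)
    have prod: "P i \<otimes>\<^bsub>Am\<^esub> Q j = (p i \<otimes>\<^bsub>A\<^esub> q j, p' i \<otimes>\<^bsub>B\<^esub> q' j)"
      unfolding Am_eq p_def q_def p'_def q'_def by (simp add: RDP_mult_gen)
    have inM: "(p i \<otimes>\<^bsub>A\<^esub> q j, p' i \<otimes>\<^bsub>B\<^esub> q' j) \<in> M"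
      using subringE(6)[OF sub PM QM] by (simp add: RDP_mult_gen p_def q_def p'_def q'_def)
    have z1: "(p i \<otimes>\<^bsub>A\<^esub> q j) [^]\<^bsub>A\<^esub> (m1 + m2) = \<zero>\<^bsub>A\<^esub>"
      using pow_add_zero[OF A _ m1] pc by auto
    have z2: "(p' i \<otimes>\<^bsub>B\<^esub> q' j) [^]\<^bsub>B\<^esub> (m2 + m1) = \<zero>\<^bsub>B\<^esub>"
      using pow_add_zero[OF B _ m2] pcB by auto
    have "(p i \<otimes>\<^bsub>A\<^esub> q j, p' i \<otimes>\<^bsub>B\<^esub> q' j) \<in> nil_elems Am"
      unfolding Am_def amal_nil_iff using inM z1 z2
      by (auto simp: Am_eq[unfolded Am_def] add.commute intro!: exI[of _ "m1 + m2"])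
    then show "P i \<otimes>\<^bsub>Am\<^esub> Q j \<in> nil_elems Am" using prod by simp
  qed
qed

theorem theorem3p1:
  fixes A :: "('a, 'm) ring_scheme" and B :: "('b, 'n) ring_scheme"
    and f :: "'a \<Rightarrow> 'b" and J :: "'b set"
  assumes "ring A" and "ring B" and "f \<in> ring_hom A B"
    and "ideal J B" and "J \<noteq> carrier B"
  shows "(nil_armendariz (amalgamation A B f J) \<longrightarrow> nil_armendariz A)
       \<and> (nil_armendariz A \<and> nil_armendariz (image_plus_ideal A B f J)
            \<longrightarrow> nil_armendariz (amalgamation A B f J))"
  using part1[OF assms(1-4)] part2[OF assms(1-4)] by blast

end
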